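(* Let $n\ge1$, $0<s<1$, $\Omega\subset\mathbb{R}^n$ a bounded open set, $f:\Omega\to\mathbb{R}$, and $u\in L^1_{2s}(\mathbb{R}^n)$ a viscosity supersolution of $(-\Delta)^s u\ge f$ in $\Omega$. If there is $x_0\in\Omega$ with $u(x_0)=\inf_{\mathbb{R}^n}u$, then \[ 2\int_{\mathbb{R}^n}\frac{u(x_0)-u(y)}{|x_0-y|^{n+2s}}\,dy\ge f(x_0). \]
   Context: $L^1_{2s}(\mathbb{R}^n)$: locally integrable $u$ with $\int\frac{|u|}{1+|x|^{n+2s}}<\infty$. A viscosity supersolution of $(-\Delta)^s u\ge f$ in $\Omega$ is $u$ upper semicontinuous in $\Omega$ such that for every $x\in\Omega$, every open neighbourhood $U\subset\Omega$ of $x$ and every $\phi\in C^2(U)$ with $\phi(x)=u(x)$ and $\phi<u$ in $U\setminus\{x\}$, setting $w=\phi$ in $U$, $w=u$ in $\mathbb{R}^n\setminus U$, one has $2\,\mathrm{P.V.}\int_{\mathbb{R}^n}\frac{w(x)-w(y)}{|x-y|^{n+2s}}dy\ge f(x)$. (The integral in the conclusion has non-positive integrand and may equal $-\infty$.) *)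

theory Defs
  imports "HOL-Analysis.Analysis"
begin

definition L1_2s :: "real \<Rightarrow> ('a::euclidean_space \<Rightarrow> real) \<Rightarrow> bool" where
  "L1_2s s u \<longleftrightarrow> u \<in> borel_measurable lebesgue \<and>
     (\<forall>K. compact K \<longrightarrow> set_integrable lebesgue K u) \<and>
     integrable lebesgue (\<lambda>x. \<bar>u x\<bar> / (1 + norm x powr (real DIM('a) + 2 * s)))"

definition usc_on :: "'a::topological_space set \<Rightarrow> ('a \<Rightarrow> real) \<Rightarrow> bool" where
  "usc_on \<Omega> u \<longleftrightarrow> (\<forall>x\<in>\<Omega>. \<forall>t. u x < t \<longrightarrow> (\<forall>\<^sub>F y in at x within \<Omega>. u y < t))"

definition C2_on :: "'a::euclidean_space set \<Rightarrow> ('a \<Rightarrow> real) \<Rightarrow> bool" where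
  "C2_on U \<phi> \<longleftrightarrow> (\<exists>(D :: 'a \<Rightarrow> 'a \<Rightarrow>\<^sub>L real) (D2 :: 'a \<Rightarrow> 'a \<Rightarrow>\<^sub>L ('a \<Rightarrow>\<^sub>L real)).
      (\<forall>x\<in>U. (\<phi> has_derivative blinfun_apply (D x)) (at x)) \<and>
      (\<forall>x\<in>U. (D has_derivative blinfun_apply (D2 x)) (at x)) \<and>
      continuous_on U D2)"

definition kern :: "real \<Rightarrow> 'a::euclidean_space \<Rightarrow> 'a \<Rightarrow> real" where
  "kern s x y = 1 / dist x y powr (real DIM('a) + 2 * s)"

definition trunc_pos :: "real \<Rightarrow> ('a::euclidean_space \<Rightarrow> real) \<Rightarrow> 'a \<Rightarrow> real \<Rightarrow> ennreal" where
  "trunc_pos s w x \<epsilon> = (\<integral>\<^sup>+ y. ennreal (max 0 ((w x - w y) * kern s x y)) * indicator {y. \<epsilon> < dist x y} y \<partial>lebesgue)"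

definition trunc_neg :: "real \<Rightarrow> ('a::euclidean_space \<Rightarrow> real) \<Rightarrow> 'a \<Rightarrow> real \<Rightarrow> ennreal" where
  "trunc_neg s w x \<epsilon> = (\<integral>\<^sup>+ y. ennreal (max 0 (- ((w x - w y) * kern s x y))) * indicator {y. \<epsilon> < dist x y} y \<partial>lebesgue)"

text \<open>\<open>2 P.V.\<integral> (w x - w y) K(x,y) dy \<ge> c\<close>: the truncated integrals are (eventually) well defined
  extended reals, converge in the extended reals as \<epsilon>\<rightarrow>0+, and twice the limit is \<ge> c.\<close>
definition pv_ge :: "real \<Rightarrow> ('a::euclidean_space \<Rightarrow> real) \<Rightarrow> 'a \<Rightarrow> real \<Rightarrow> bool" where
  "pv_ge s w x c \<longleftrightarrow> (\<exists>L::ereal.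
      (\<forall>\<^sub>F \<epsilon> in at_right 0. trunc_pos s w x \<epsilon> \<noteq> \<infinity> \<or> trunc_neg s w x \<epsilon> \<noteq> \<infinity>) \<and>
      ((\<lambda>\<epsilon>. enn2ereal (trunc_pos s w x \<epsilon>) - enn2ereal (trunc_neg s w x \<epsilon>)) \<longlongrightarrow> L) (at_right 0) \<and>
      ereal c \<le> 2 * L)"

definition visc_super :: "real \<Rightarrow> 'a::euclidean_space set \<Rightarrow> ('a \<Rightarrow> real) \<Rightarrow> ('a \<Rightarrow> real) \<Rightarrow> bool" where
  "visc_super s \<Omega> u f \<longleftrightarrow> usc_on \<Omega> u \<and>
     (\<forall>x\<in>\<Omega>. \<forall>U \<phi>. open U \<and> x \<in> U \<and> U \<subseteq> \<Omega> \<and> C2_on U \<phi> \<and> \<phi> x = u x \<and>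
        (\<forall>y\<in>U - {x}. \<phi> y < u y) \<longrightarrow>
        pv_ge s (\<lambda>y. if y \<in> U then \<phi> y else u y) x (f x))"

end

theory Submission
  imports Defs
begin


lemma C2_test:
  fixes x0 :: "'a::euclidean_space"
  assumes k: "2 \<le> k"
  shows "C2_on U (\<lambda>y. m - e * (inner (y - x0) (y - x0)) ^ k)"
proof -
  define g where "g y = inner (y - x0) (y - x0)" for y
  define c where "c y = - (e * (real k * g y ^ (k - 1) * 2))" for y
  define c2 where "c2 y = - (e * (real k * (real (k - 1) * g y ^ (k - 2) * 2) * 2))" for y
  define B where "B y = blinfun_inner_right (y - x0)" for y
  define BIR :: "'a \<Rightarrow>\<^sub>L ('a \<Rightarrow>\<^sub>L real)" where "BIR = Blinfun blinfun_inner_right"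
  define D where "D y = c y *\<^sub>R B y" for y
  define D2 where "D2 y = c y *\<^sub>R BIR + (blinfun_scaleR_left (B y) o\<^sub>L (c2 y *\<^sub>R blinfun_inner_right (y - x0)))" for y
  have BIRa: "blinfun_apply BIR h = blinfun_inner_right h" for h
    unfolding BIR_def by (simp add: bounded_linear_Blinfun_apply bounded_linear_blinfun_inner_right)
  have gd: "(g has_derivative (\<lambda>h. 2 * inner (y - x0) h)) (at y)" for y
    unfolding g_def
    by (auto intro!: derivative_eq_intros simp: inner_commute)
  have 1: "((\<lambda>y. m - e * (inner (y - x0) (y - x0)) ^ k) has_derivative blinfun_apply (D y)) (at y)" for y
  proof -
    have "((\<lambda>y. m - e * g y ^ k) has_derivative (\<lambda>h. 0 - e * (real k * g y ^ (k - 1) * (2 * inner (y - x0) h)))) (at y)"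
      by (rule has_derivative_eq_rhs, (rule derivative_eq_intros gd refl)+, auto simp: fun_eq_iff algebra_simps)
    moreover have "(\<lambda>h. 0 - e * (real k * g y ^ (k - 1) * (2 * inner (y - x0) h))) = blinfun_apply (D y)"
      by (auto simp: fun_eq_iff D_def c_def B_def algebra_simps inner_diff_left blinfun.bilinear_simps)
    ultimately show ?thesis by (simp add: g_def)
  qed
  have cd: "(c has_derivative (\<lambda>h. c2 y * inner (y - x0) h)) (at y)" for y
  proof -
    have "(c has_derivative (\<lambda>h. - (e * (real k * (real (k - 1) * g y ^ (k - 2) * (2 * inner (y - x0) h)) * 2)))) (at y)"
      unfolding c_def
      by (rule has_derivative_eq_rhs, (rule derivative_eq_intros gd refl)+, auto simp: fun_eq_iff algebra_simps numeral_2_eq_2)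
    moreover have "(\<lambda>h. - (e * (real k * (real (k - 1) * g y ^ (k - 2) * (2 * inner (y - x0) h)) * 2))) = (\<lambda>h. c2 y * inner (y - x0) h)"
      by (auto simp: c2_def algebra_simps)
    ultimately show ?thesis by simp
  qed
  have Bd: "(B has_derivative blinfun_inner_right) (at y)" for y
    unfolding B_def
    by (rule has_derivative_eq_rhs, rule bounded_linear.has_derivative[OF bounded_linear_blinfun_inner_right], (rule derivative_eq_intros)+, auto)
  have 2: "(D has_derivative blinfun_apply (D2 y)) (at y)" for y
  proof -
    have "(D has_derivative (\<lambda>h. c y *\<^sub>R blinfun_inner_right h + (c2 y * inner (y - x0) h) *\<^sub>R B y)) (at y)"
      unfolding D_def by (rule derivative_eq_intros cd Bd refl)+
    moreover have "(\<lambda>h. c y *\<^sub>R blinfun_inner_right h + (c2 y * inner (y - x0) h) *\<^sub>R B y) = blinfun_apply (D2 y)"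
      by (auto simp: fun_eq_iff D2_def BIRa blinfun.bilinear_simps)
    ultimately show ?thesis by simp
  qed
  have Bc: "continuous_on U B"
    by (rule continuous_at_imp_continuous_on, auto intro: has_derivative_continuous[OF Bd])
  have cc: "continuous_on U c"
    by (rule continuous_at_imp_continuous_on, auto intro: has_derivative_continuous[OF cd])
  have c2c: "continuous_on U c2"
    unfolding c2_def g_def by (intro continuous_intros)
  have 3: "continuous_on U D2"
  proof (rule continuous_on_blinfun_componentwise)
    fix i :: 'a
    have eq: "(\<lambda>y. blinfun_apply (D2 y) i) = (\<lambda>y. c y *\<^sub>R blinfun_inner_right i + (c2 y * inner (y - x0) i) *\<^sub>R B y)"
      by (auto simp: D2_def BIRa blinfun.bilinear_simps)
    show "continuous_on U (\<lambda>y. blinfun_apply (D2 y) i)"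
      unfolding eq using Bc cc c2c by (intro continuous_intros)
  qed
  show ?thesis unfolding C2_on_def using 1 2 3 by blast
qed


lemma kern_self: "kern s x x = 0"
  by (simp add: kern_def)

lemma kern_nonneg: "0 \<le> kern s x y"
  by (simp add: kern_def)

lemma test_fin: "emeasure lebesgue (ball (x0::'a::euclidean_space) 1) < \<infinity>"
  using emeasure_bounded_finite[of "ball x0 1"] by (simp add: emeasure_completion)

lemma test_meas:
  assumes [measurable]: "u \<in> borel_measurable lebesgue"
  shows "(\<lambda>y. ennreal ((u y - u x0) * kern s (x0::'a::euclidean_space) y) * indicator (- ball x0 r) y) \<in> borel_measurable lebesgue"
proof -
  have k: "kern s x0 \<in> borel_measurable borel"
    unfolding kern_def by measurable
  have k2: "kern s x0 \<in> borel_measurable lebesgue"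
    using k by (intro measurable_completion) simp
  have i: "(indicator (- ball x0 r) :: 'a \<Rightarrow> ennreal) \<in> borel_measurable lebesgue"
    by (intro borel_measurable_indicator) (simp add: sets_completionI_sets)
  show ?thesis using k2 i by measurable
qed

lemma bound_pt:
  fixes x0 y :: "'a::euclidean_space"
  assumes "y \<noteq> x0" "dist x0 y < 1" "0 < s" "s < 1" "0 \<le> e"
  shows "e * (inner (y - x0) (y - x0)) ^ (DIM('a) + 1) * kern s x0 y \<le> e"
proof -
  define d where "d = dist x0 y"
  have d: "0 < d" "d < 1" using assms by (auto simp: d_def)
  have q: "inner (y - x0) (y - x0) = d ^ 2"
    by (simp add: d_def dist_norm power2_norm_eq_inner norm_minus_commute inner_commute inner_diff_left inner_diff_right)
  have "(d ^ 2) ^ (DIM('a) + 1) = d ^ (2 * (DIM('a) + 1))"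
    by (simp only: power_mult)
  also have "\<dots> = d powr (real (2 * (DIM('a) + 1)))"
    using d by (simp only: powr_realpow)
  also have "\<dots> \<le> d powr (real DIM('a) + 2 * s)"
    by (rule powr_mono') (use d assms in auto)
  finally have "(d ^ 2) ^ (DIM('a) + 1) * kern s x0 y \<le> 1"
    using d by (simp add: kern_def d_def[symmetric] divide_le_eq_1)
  then show ?thesis using assms(5) q
    by (metis mult.assoc mult.right_neutral mult_left_mono)
qed

lemma claimA:
  fixes s :: real and \<Omega> :: "'a::euclidean_space set"
    and f :: "'a \<Rightarrow> real" and u :: "'a \<Rightarrow> real" and x0 :: 'a
  assumes s: "0 < s" "s < 1"
    and meas: "u \<in> borel_measurable lebesgue"
    and vs: "visc_super s \<Omega> u f"
    and x0: "x0 \<in> \<Omega>" "\<forall>y. u x0 \<le> u y"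
    and r: "0 < r" "r \<le> 1" "ball x0 r \<subseteq> \<Omega>"
    and e: "0 < e"
  shows "ereal (f x0) \<le> 2 * (ereal (e * enn2real (emeasure lebesgue (ball x0 1))) -
     enn2ereal (\<integral>\<^sup>+ y. ennreal ((u y - u x0) * kern s x0 y) * indicator (- ball x0 r) y \<partial>lebesgue))"
proof -
  define k where "k = DIM('a) + 1"
  define V where "V = enn2real (emeasure lebesgue (ball x0 1))"
  have V: "emeasure lebesgue (ball x0 1) = ennreal V" "0 \<le> V"
    using test_fin[of x0] by (auto simp: V_def ennreal_enn2real_if)
  define N where "N = (\<integral>\<^sup>+ y. ennreal ((u y - u x0) * kern s x0 y) * indicator (- ball x0 r) y \<partial>lebesgue)"
  define \<phi> where "\<phi> = (\<lambda>y. u x0 - e * (inner (y - x0) (y - x0)) ^ k)"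
  define U where "U = ball x0 r"
  define w where "w = (\<lambda>y. if y \<in> U then \<phi> y else u y)"
  have C2: "C2_on U \<phi>" unfolding \<phi>_def by (rule C2_test) (simp add: k_def)
  have pos: "\<phi> y < u y" if "y \<in> U - {x0}" for y
  proof -
    have "0 < inner (y - x0) (y - x0)" using that by simp
    then have "0 < e * (inner (y - x0) (y - x0)) ^ k" using e by simp
    then show ?thesis unfolding \<phi>_def using x0(2) by (smt (verit))
  qed
  have "pv_ge s w x0 (f x0)"
  proof -
    have all: "\<forall>U \<phi>. open U \<and> x0 \<in> U \<and> U \<subseteq> \<Omega> \<and> C2_on U \<phi> \<and> \<phi> x0 = u x0 \<and>
        (\<forall>y\<in>U - {x0}. \<phi> y < u y) \<longrightarrow> pv_ge s (\<lambda>y. if y \<in> U then \<phi> y else u y) x0 (f x0)"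
      using vs x0(1) unfolding visc_super_def by blast
    have "\<phi> x0 = u x0" by (simp add: \<phi>_def k_def)
    moreover have "open U" "x0 \<in> U" "U \<subseteq> \<Omega>" using r by (auto simp: U_def)
    ultimately show ?thesis using all C2 pos unfolding w_def by blast
  qed
  then obtain L where L1: "((\<lambda>\<epsilon>. enn2ereal (trunc_pos s w x0 \<epsilon>) - enn2ereal (trunc_neg s w x0 \<epsilon>)) \<longlongrightarrow> L) (at_right 0)"
     and L2: "ereal (f x0) \<le> 2 * L"
    unfolding pv_ge_def by blast
  have wx0: "w x0 = u x0" using r by (simp add: w_def U_def \<phi>_def k_def)
  have tp: "trunc_pos s w x0 \<delta> \<le> ennreal (e * V)" for \<delta>
  proof -
    have "trunc_pos s w x0 \<delta> \<le> (\<integral>\<^sup>+ y. ennreal e * indicator (ball x0 1) y \<partial>lebesgue)"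
      unfolding trunc_pos_def
    proof (rule nn_integral_mono)
      fix y
      show "ennreal (max 0 ((w x0 - w y) * kern s x0 y)) * indicator {y. \<delta> < dist x0 y} y
            \<le> ennreal e * indicator (ball x0 1) y"
      proof (cases "y \<in> U \<and> y \<noteq> x0")
        case True
        then have "dist x0 y < 1" using r by (auto simp: U_def)
        then have "e * (inner (y - x0) (y - x0)) ^ k * kern s x0 y \<le> e"
          using bound_pt[of y x0 s e] True s e by (simp add: k_def)
        moreover have "0 \<le> e * (inner (y - x0) (y - x0)) ^ k * kern s x0 y"
          using e by (simp add: kern_nonneg)
        ultimately show ?thesis using True \<open>dist x0 y < 1\<close> wx0
          by (auto simp: indicator_def w_def \<phi>_def dist_commute intro!: ennreal_leI)
      next
        case False
        have "(w x0 - w y) * kern s x0 y \<le> 0"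
        proof (cases "y = x0")
          case True then show ?thesis by (simp add: kern_self)
        next
          case F2: False
          then have "y \<notin> U" using False by blast
          then show ?thesis using wx0 x0(2) kern_nonneg[of s x0 y]
            by (simp add: w_def mult_nonpos_nonneg)
        qed
        then show ?thesis by (simp add: max_def)
      qed
    qed
    also have "\<dots> = ennreal e * emeasure lebesgue (ball x0 1)"
      by (rule nn_integral_cmult_indicator) (simp add: sets_completionI_sets)
    also have "\<dots> = ennreal (e * V)" using V e by (simp add: ennreal_mult)
    finally show ?thesis .
  qed
  have tn: "trunc_neg s w x0 \<delta> = N" if "0 < \<delta>" "\<delta> < r" for \<delta>
    unfolding trunc_neg_def N_def
  proof (rule nn_integral_cong)
    fix y
    show "ennreal (max 0 (- ((w x0 - w y) * kern s x0 y))) * indicator {y. \<delta> < dist x0 y} y =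
          ennreal ((u y - u x0) * kern s x0 y) * indicator (- ball x0 r) y"
    proof (cases "y \<in> U")
      case True
      have "0 \<le> e * (inner (y - x0) (y - x0)) ^ k * kern s x0 y"
        using e by (simp add: kern_nonneg)
      then show ?thesis using True wx0
        by (auto simp: U_def w_def \<phi>_def max_def indicator_def)
    next
      case False
      then have "\<delta> < dist x0 y" using that by (auto simp: U_def)
      moreover have "(u x0 - u y) * kern s x0 y \<le> 0"
        using x0(2) kern_nonneg[of s x0 y] by (simp add: mult_nonpos_nonneg)
      moreover have "- ((u x0 - u y) * kern s x0 y) = (u y - u x0) * kern s x0 y" by algebra
      ultimately show ?thesis using False wx0
        by (auto simp: U_def w_def indicator_def max_def)
    qed
  qed
  have ev: "\<forall>\<^sub>F \<delta> in at_right 0. enn2ereal (trunc_pos s w x0 \<delta>) - enn2ereal (trunc_neg s w x0 \<delta>)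
       \<le> ereal (e * V) - enn2ereal N"
    using eventually_at_right_real[OF r(1)]
  proof eventually_elim
    case (elim \<delta>)
    then have "trunc_neg s w x0 \<delta> = N" using tn by auto
    moreover have "enn2ereal (trunc_pos s w x0 \<delta>) \<le> ereal (e * V)"
      using tp[of \<delta>] e V by (metis enn2ereal_ennreal less_eq_ennreal.rep_eq mult_nonneg_nonneg less_imp_le)
    ultimately show ?case by (auto intro: ereal_minus_mono)
  qed
  have "L \<le> ereal (e * V) - enn2ereal N"
    by (rule tendsto_upperbound[OF L1 ev]) simp
  then have "2 * L \<le> 2 * (ereal (e * V) - enn2ereal N)"
    by (rule ereal_mult_left_mono) simp
  then show ?thesis using L2 unfolding V_def N_def by simp
qed



theorem lemma6p3:
  fixes s :: real and \<Omega> :: "'a::euclidean_space set"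
    and f :: "'a \<Rightarrow> real" and u :: "'a \<Rightarrow> real" and x0 :: 'a
  assumes "0 < s" "s < 1"
    and "bounded \<Omega>" "open \<Omega>"
    and "L1_2s s u"
    and "visc_super s \<Omega> u f"
    and "x0 \<in> \<Omega>" "\<forall>y. u x0 \<le> u y"
  shows "ereal (f x0) \<le>
    - 2 * enn2ereal (\<integral>\<^sup>+ y. ennreal ((u y - u x0) * kern s x0 y) \<partial>lebesgue)"
proof -
  have meas: "u \<in> borel_measurable lebesgue" using assms(5) by (simp add: L1_2s_def)
  obtain r1 where r1: "0 < r1" "ball x0 r1 \<subseteq> \<Omega>"
    using assms(4,7) open_contains_ball by blast
  define r0 where "r0 = min r1 1"
  have r0: "0 < r0" "r0 \<le> 1" "ball x0 r0 \<subseteq> \<Omega>" using r1 by (auto simp: r0_def)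
  define V where "V = enn2real (emeasure lebesgue (ball x0 1))"
  have V: "0 \<le> V" by (simp add: V_def)
  define N where "N r = (\<integral>\<^sup>+ y. ennreal ((u y - u x0) * kern s x0 y) * indicator (- ball x0 r) y \<partial>lebesgue)" for r
  have B: "f x0 \<le> 0 \<and> N r \<le> ennreal (- f x0 / 2)" if r: "0 < r" "r \<le> r0" for r
  proof -
    have A: "ereal (f x0) \<le> 2 * (ereal (e * V) - enn2ereal (N r))" if "0 < e" for e
      unfolding V_def N_def
      by (rule claimA[OF assms(1,2) meas assms(6,7,8)]) (use r r0 that in auto)
    show ?thesis
    proof (cases "N r")
      case top
      then show ?thesis using A[of 1] by simp
    next
      case (real t)
      have A': "f x0 \<le> 2 * (e * V - t)" if "0 < e" for e
        using A[OF that] real by simp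
      have "f x0 \<le> -2 * t"
      proof (rule field_le_epsilon)
        fix e' :: real assume e': "0 < e'"
        define e where "e = e' / (2 * (V + 1))"
        have e: "0 < e" using e' V by (simp add: e_def)
        have "e * V \<le> e * (V + 1)" using e by simp
        also have "\<dots> = e' / 2" using V unfolding e_def by (simp add: field_split_simps)
        finally show "f x0 \<le> -2 * t + e'" using A'[OF e] by simp
      qed
      then show ?thesis using real by (auto intro!: ennreal_leI)
    qed
  qed
  define rj where "rj j = r0 / real (Suc j)" for j
  have rj: "0 < rj j" "rj j \<le> r0" for j
    using r0 by (auto simp: rj_def divide_le_eq)
  define g where "g j y = ennreal ((u y - u x0) * kern s x0 y) * indicator (- ball x0 (rj j)) y" for j y
  have inc: "incseq g"
  proof (rule incseq_SucI, rule le_funI)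
    fix j y
    have "rj (Suc j) \<le> rj j" using r0 by (simp add: rj_def frac_le)
    then show "g j y \<le> g (Suc j) y"
      by (auto simp: g_def indicator_def)
  qed
  have gm: "g j \<in> borel_measurable lebesgue" for j
    unfolding g_def using test_meas[OF meas] by blast
  have sup: "(SUP j. g j y) = ennreal ((u y - u x0) * kern s x0 y)" for y
  proof (cases "y = x0")
    case True then show ?thesis by (simp add: g_def kern_self)
  next
    case False
    then have dpos: "0 < dist x0 y" by simp
    obtain n where n: "r0 / dist x0 y < real n"
      using reals_Archimedean2 by blast
    then have j: "r0 / dist x0 y < real (Suc n)" by simp
    have "r0 < real (Suc n) * dist x0 y" using j dpos by (simp add: divide_less_eq)
    then have "rj n < dist x0 y"
      unfolding rj_def by (simp add: divide_less_eq mult.commute)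
    then have gj: "g n y = ennreal ((u y - u x0) * kern s x0 y)" by (simp add: g_def)
    show ?thesis
    proof (rule antisym)
      show "(SUP j. g j y) \<le> ennreal ((u y - u x0) * kern s x0 y)"
      proof (rule SUP_least)
        fix j
        show "g j y \<le> ennreal ((u y - u x0) * kern s x0 y)"
          unfolding g_def by (cases "y \<in> - ball x0 (rj j)") simp_all
      qed
      show "ennreal ((u y - u x0) * kern s x0 y) \<le> (SUP j. g j y)"
        unfolding gj[symmetric] by (rule SUP_upper) simp
    qed
  qed
  have "(\<integral>\<^sup>+ y. ennreal ((u y - u x0) * kern s x0 y) \<partial>lebesgue) = (\<integral>\<^sup>+ y. (SUP j. g j y) \<partial>lebesgue)"
    by (simp add: sup)
  also have "\<dots> = (SUP j. integral\<^sup>N lebesgue (g j))"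
    by (rule nn_integral_monotone_convergence_SUP[OF inc gm])
  also have "\<dots> \<le> ennreal (- f x0 / 2)"
  proof (rule SUP_least)
    fix j
    have "integral\<^sup>N lebesgue (g j) = N (rj j)" by (simp add: g_def[abs_def] N_def)
    then show "integral\<^sup>N lebesgue (g j) \<le> ennreal (- f x0 / 2)" using B[OF rj(1) rj(2)] by simp
  qed
  finally have I: "(\<integral>\<^sup>+ y. ennreal ((u y - u x0) * kern s x0 y) \<partial>lebesgue) \<le> ennreal (- f x0 / 2)" .
  have f0: "f x0 \<le> 0" using B[OF r0(1) order_refl] by simp
  show ?thesis
  proof (cases "\<integral>\<^sup>+ y. ennreal ((u y - u x0) * kern s x0 y) \<partial>lebesgue")
    case top then show ?thesis using I by (simp add: top_unique)
  next
    case (real t)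
    then have "t \<le> - f x0 / 2" using I f0 by (simp add: ennreal_le_iff)
    then show ?thesis using real by simp
  qed
qed


end
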